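(* Let $G=(V,E)$ be a connected undirected graph, regarded as the metric space $(V,\delta)$ where $\delta(u,v)$ is the number of edges on a shortest $u$–$v$ path. Let $P\subsetneq V$ with $|P|\ge 2$. Then $GR_P\ge \tfrac{2}{3}$, and if $GR_P=\tfrac{2}{3}$ then $R_P=1$ and $r_P=\tfrac{3}{2}$.
   Context: For a metric space $(\mathcal{M},\delta)$ and a finite set $P\subset\mathcal{M}$ with $|P|\ge 2$, define $r_P=\min_{p,q\in P,\,p\neq q}\delta(p,q)/2$, $R_P=\sup_{x\in\mathcal{M}}\min_{p\in P}\delta(x,p)$, and the gap ratio $GR_P=R_P/r_P$. *)

theory Defs
  imports Complex_Main "HOL-Library.Extended_Real"
begin

text \<open>A metric space is given by a carrier M and a distance function delta.
  r_P = min over distinct p, q in P of delta p q / 2;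
  R_P = sup over x in M of min over p in P of delta x p (an extended real,
  since the supremum may be infinite); GR_P = R_P / r_P.\<close>

definition packing_radius :: "('a \<Rightarrow> 'a \<Rightarrow> real) \<Rightarrow> 'a set \<Rightarrow> real" where
  "packing_radius \<delta> P = Min {\<delta> p q / 2 | p q. p \<in> P \<and> q \<in> P \<and> p \<noteq> q}"

definition covering_radius :: "'a set \<Rightarrow> ('a \<Rightarrow> 'a \<Rightarrow> real) \<Rightarrow> 'a set \<Rightarrow> ereal" where
  "covering_radius M \<delta> P = (SUP x\<in>M. ereal (Min ((\<lambda>p. \<delta> x p) ` P)))"

definition gap_ratio :: "'a set \<Rightarrow> ('a \<Rightarrow> 'a \<Rightarrow> real) \<Rightarrow> 'a set \<Rightarrow> ereal" where
  "gap_ratio M \<delta> P = covering_radius M \<delta> P / ereal (packing_radius \<delta> P)"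

definition undirected_graph :: "'a set \<Rightarrow> ('a \<Rightarrow> 'a \<Rightarrow> bool) \<Rightarrow> bool" where
  "undirected_graph V E \<longleftrightarrow> (\<forall>u v. E u v \<longrightarrow> u \<in> V \<and> v \<in> V \<and> E v u)"

definition walk_of_length :: "'a set \<Rightarrow> ('a \<Rightarrow> 'a \<Rightarrow> bool) \<Rightarrow> 'a \<Rightarrow> 'a \<Rightarrow> nat \<Rightarrow> bool" where
  "walk_of_length V E u v n \<longleftrightarrow>
     (\<exists>xs. length xs = Suc n \<and> hd xs = u \<and> last xs = v \<and> set xs \<subseteq> V \<and>
           (\<forall>i < n. E (xs ! i) (xs ! Suc i)))"

definition connected_graph :: "'a set \<Rightarrow> ('a \<Rightarrow> 'a \<Rightarrow> bool) \<Rightarrow> bool" where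
  "connected_graph V E \<longleftrightarrow> undirected_graph V E \<and> V \<noteq> {} \<and>
     (\<forall>u\<in>V. \<forall>v\<in>V. \<exists>n. walk_of_length V E u v n)"

definition graph_dist :: "'a set \<Rightarrow> ('a \<Rightarrow> 'a \<Rightarrow> bool) \<Rightarrow> 'a \<Rightarrow> 'a \<Rightarrow> nat" where
  "graph_dist V E u v = (LEAST n. walk_of_length V E u v n)"

end

theory Submission
  imports Defs
begin

definition W :: "'a set \<Rightarrow> ('a \<Rightarrow> 'a \<Rightarrow> bool) \<Rightarrow> 'a \<Rightarrow> 'a \<Rightarrow> nat \<Rightarrow> bool" where
  "W V E u v n \<longleftrightarrow> (\<exists>f. f 0 = u \<and> f n = v \<and> (\<forall>i\<le>n. f i \<in> V) \<and> (\<forall>i<n. E (f i) (f (Suc i))))"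

lemma walk_W: "walk_of_length V E u v n \<longleftrightarrow> W V E u v n"
proof
  assume "walk_of_length V E u v n"
  then obtain xs where xs: "length xs = Suc n" "hd xs = u" "last xs = v" "set xs \<subseteq> V"
    "\<forall>i < n. E (xs ! i) (xs ! Suc i)" unfolding walk_of_length_def by blast
  have "xs \<noteq> []" using xs(1) by auto
  hence "xs ! 0 = u" "xs ! n = v" using xs by (auto simp: hd_conv_nth last_conv_nth)
  moreover have "\<forall>i\<le>n. xs ! i \<in> V" using xs(1,4) by (auto intro!: subsetD[OF xs(4)] nth_mem)
  ultimately show "W V E u v n" unfolding W_def using xs(5) by (intro exI[of _ "(!) xs"]) auto
next
  assume "W V E u v n"
  then obtain f where f: "f 0 = u" "f n = v" "\<forall>i\<le>n. f i \<in> V" "\<forall>i<n. E (f i) (f (Suc i))"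
    unfolding W_def by blast
  let ?xs = "map f [0..<Suc n]"
  have "length ?xs = Suc n" by simp
  moreover have "hd ?xs = u" using f by (simp del: upt_Suc add: hd_map upt_conv_Cons)
  moreover have "last ?xs = v" using f by (simp add: last_map)
  moreover have "set ?xs \<subseteq> V" using f by auto
  moreover have "\<forall>i < n. E (?xs ! i) (?xs ! Suc i)" using f(4)
    by (simp del: upt_Suc add: nth_map_upt)
  ultimately show "walk_of_length V E u v n" unfolding walk_of_length_def by blast
qed

lemma W_refl: "u \<in> V \<Longrightarrow> W V E u u 0"
  unfolding W_def by (intro exI[of _ "\<lambda>_. u"]) auto

lemma W_zero: "W V E u v 0 \<Longrightarrow> u = v"
  unfolding W_def by auto

lemma W_trans: assumes "W V E u v n" "W V E v w m" shows "W V E u w (n + m)"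
proof -
  obtain f where f: "f 0 = u" "f n = v" "\<forall>i\<le>n. f i \<in> V" "\<forall>i<n. E (f i) (f (Suc i))"
    using assms(1) unfolding W_def by blast
  obtain g where g: "g 0 = v" "g m = w" "\<forall>i\<le>m. g i \<in> V" "\<forall>i<m. E (g i) (g (Suc i))"
    using assms(2) unfolding W_def by blast
  define h where "h i = (if i \<le> n then f i else g (i - n))" for i
  have "h 0 = u" using f by (simp add: h_def)
  moreover have "h (n+m) = w" using f g by (cases "m = 0") (auto simp: h_def)
  moreover have "\<forall>i\<le>n+m. h i \<in> V" using f g by (auto simp: h_def)
  moreover have "\<forall>i<n+m. E (h i) (h (Suc i))"
  proof (intro allI impI)
    fix i assume i: "i < n + m"
    show "E (h i) (h (Suc i))"
    proof (cases "i < n")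
      case True thus ?thesis using f by (simp add: h_def)
    next
      case False
      hence "i - n < m" "Suc i - n = Suc (i - n)" using i by auto
      thus ?thesis using g f False by (cases "i = n") (auto simp: h_def)
    qed
  qed
  ultimately show ?thesis unfolding W_def by blast
qed

lemma W_sym: assumes "undirected_graph V E" "W V E u v n" shows "W V E v u n"
proof -
  obtain f where f: "f 0 = u" "f n = v" "\<forall>i\<le>n. f i \<in> V" "\<forall>i<n. E (f i) (f (Suc i))"
    using assms(2) unfolding W_def by blast
  have "\<forall>i<n. E (f (n - i)) (f (n - Suc i))"
  proof (intro allI impI)
    fix i assume i: "i < n"
    have "E (f (n - Suc i)) (f (Suc (n - Suc i)))" using f(4) i by auto
    moreover have "Suc (n - Suc i) = n - i" using i by auto
    ultimately show "E (f (n - i)) (f (n - Suc i))" using assms(1)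
      unfolding undirected_graph_def by metis
  qed
  thus ?thesis unfolding W_def using f by (intro exI[of _ "\<lambda>i. f (n - i)"]) auto
qed

lemma W_split: assumes "W V E u v n" "k \<le> n" shows "\<exists>x. x \<in> V \<and> W V E u x k \<and> W V E x v (n - k)"
proof -
  obtain f where f: "f 0 = u" "f n = v" "\<forall>i\<le>n. f i \<in> V" "\<forall>i<n. E (f i) (f (Suc i))"
    using assms(1) unfolding W_def by blast
  have "W V E u (f k) k" unfolding W_def using f assms(2) by (intro exI[of _ f]) auto
  moreover have "W V E (f k) v (n - k)" unfolding W_def using f assms(2)
    by (intro exI[of _ "\<lambda>i. f (k + i)"]) auto
  ultimately show ?thesis using f assms(2) by auto
qed

lemma W_in: "W V E u v n \<Longrightarrow> u \<in> V \<and> v \<in> V"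
  unfolding W_def by force

lemma dist_W: assumes "connected_graph V E" "u \<in> V" "v \<in> V"
  shows "W V E u v (graph_dist V E u v)"
proof -
  have "\<exists>n. W V E u v n" using assms unfolding connected_graph_def walk_W by blast
  thus ?thesis unfolding graph_dist_def walk_W by (rule LeastI_ex)
qed

lemma dist_le: "W V E u v n \<Longrightarrow> graph_dist V E u v \<le> n"
  unfolding graph_dist_def walk_W by (rule Least_le)

lemma dist_tri: assumes "connected_graph V E" "u \<in> V" "v \<in> V" "w \<in> V"
  shows "graph_dist V E u w \<le> graph_dist V E u v + graph_dist V E v w"
  using dist_le[OF W_trans[OF dist_W[OF assms(1,2,3)] dist_W[OF assms(1,3,4)]]] .

lemma dist_sym: assumes "connected_graph V E" "u \<in> V" "v \<in> V"
  shows "graph_dist V E u v = graph_dist V E v u"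
proof -
  have ug: "undirected_graph V E" using assms(1) unfolding connected_graph_def by auto
  have "graph_dist V E u v \<le> graph_dist V E v u"
    using dist_le[OF W_sym[OF ug dist_W[OF assms(1,3,2)]]] .
  moreover have "graph_dist V E v u \<le> graph_dist V E u v"
    using dist_le[OF W_sym[OF ug dist_W[OF assms(1,2,3)]]] .
  ultimately show ?thesis by simp
qed

lemma dist_pos: assumes "connected_graph V E" "u \<in> V" "v \<in> V" "u \<noteq> v"
  shows "graph_dist V E u v \<ge> 1"
  using dist_W[OF assms(1,2,3)] W_zero[of V E u v] assms(4) by (cases "graph_dist V E u v") auto

theorem lemma4:
  fixes V :: "'a set" and E :: "'a \<Rightarrow> 'a \<Rightarrow> bool" and P :: "'a set"
  assumes "connected_graph V E"
    and "P \<subseteq> V" and "P \<noteq> V" and "finite P" and "card P \<ge> 2"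
  defines "\<delta> \<equiv> (\<lambda>u v. real (graph_dist V E u v))"
  shows "gap_ratio V \<delta> P \<ge> 2/3 \<and>
         (gap_ratio V \<delta> P = 2/3 \<longrightarrow>
            covering_radius V \<delta> P = 1 \<and> packing_radius \<delta> P = 3/2)"
proof -
  note cg = assms(1)
  let ?D = "{\<delta> p q / 2 | p q. p \<in> P \<and> q \<in> P \<and> p \<noteq> q}"
  have Deq: "?D = (\<lambda>(p,q). \<delta> p q / 2) ` {(p,q). p \<in> P \<and> q \<in> P \<and> p \<noteq> q}" 
  proof (rule set_eqI, rule iffI)
    fix y assume "y \<in> ?D"
    then obtain p q where "y = \<delta> p q / 2" "p \<in> P" "q \<in> P" "p \<noteq> q" by blast
    thus "y \<in> (\<lambda>(p,q). \<delta> p q / 2) ` {(p,q). p \<in> P \<and> q \<in> P \<and> p \<noteq> q}"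
      by (intro image_eqI[of _ _ "(p,q)"]) auto
  qed (force simp del: \<delta>_def)
  have fin: "finite ?D" unfolding Deq
    by (rule finite_imageI, rule finite_subset[of _ "P \<times> P"]) (use assms(4) in auto)
  obtain p0 q0 where pq0: "p0 \<in> P" "q0 \<in> P" "p0 \<noteq> q0"
  proof -
    have "\<not> card P \<le> 1" using assms(5) by simp
    then obtain p0 q0 where "p0 \<in> P" "q0 \<in> P" "p0 \<noteq> q0" using card_le_Suc0_iff_eq[OF assms(4)] by auto
    thus ?thesis using that by blast
  qed
  have ne: "?D \<noteq> {}" using pq0 by blast
  have "packing_radius \<delta> P \<in> ?D" unfolding packing_radius_def using Min_in[OF fin ne] .
  then obtain p q where pq: "p \<in> P" "q \<in> P" "p \<noteq> q" "packing_radius \<delta> P = \<delta> p q / 2" by blast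
  define d where "d = graph_dist V E p q"
  have minD: "d \<le> graph_dist V E p' q'" if "p' \<in> P" "q' \<in> P" "p' \<noteq> q'" for p' q'
  proof -
    have "\<delta> p' q' / 2 \<in> ?D" using that by blast
    hence "packing_radius \<delta> P \<le> \<delta> p' q' / 2" unfolding packing_radius_def by (rule Min_le[OF fin])
    thus ?thesis using pq(4) unfolding d_def \<delta>_def by simp
  qed
  have pV: "p \<in> V" "q \<in> V" using pq assms(2) by auto
  have d1: "d \<ge> 1" unfolding d_def using dist_pos[OF cg pV] pq(3) by simp
  have rP: "packing_radius \<delta> P = real d / 2" using pq(4) unfolding d_def \<delta>_def by simp
  have Pne: "P \<noteq> {}" using pq by auto
  have cov_ge: "covering_radius V \<delta> P \<ge> ereal m"
    if "x \<in> V" "\<And>p'. p' \<in> P \<Longrightarrow> graph_dist V E x p' \<ge> m" for x m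
  proof -
    have "m \<le> Min ((\<lambda>p. \<delta> x p) ` P)" using that(2) assms(4) Pne unfolding \<delta>_def by auto
    hence "ereal m \<le> ereal (Min ((\<lambda>p. \<delta> x p) ` P))" by simp
    also have "\<dots> \<le> covering_radius V \<delta> P" unfolding covering_radius_def
      using that(1) by (rule SUP_upper)
    finally show ?thesis .
  qed
  obtain x0 where x0: "x0 \<in> V" "x0 \<notin> P" using assms(2,3) by blast
  have R1: "covering_radius V \<delta> P \<ge> ereal (real (1::nat))"
  proof (rule cov_ge[OF x0(1)])
    fix p' assume "p' \<in> P"
    thus "1 \<le> graph_dist V E x0 p'" using dist_pos[OF cg x0(1)] assms(2) x0(2) by auto
  qed
  define k where "k = d div 2"
  obtain x where x: "x \<in> V" "W V E p x k" "W V E x q (d - k)"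
    using W_split[OF dist_W[OF cg pV], of k] unfolding d_def[symmetric] k_def by auto
  have pxk: "graph_dist V E p x \<le> k" using dist_le[OF x(2)] .
  have R2: "covering_radius V \<delta> P \<ge> ereal (real k)"
  proof (rule cov_ge[OF x(1)])
    fix p' assume p': "p' \<in> P"
    have p'V: "p' \<in> V" using p' assms(2) by auto
    show "k \<le> graph_dist V E x p'"
    proof (cases "p' = p")
      case True
      have "d \<le> graph_dist V E p x + graph_dist V E x q"
        using dist_tri[OF cg pV(1) x(1) pV(2)] unfolding d_def by simp
      moreover have "graph_dist V E x q \<le> d - k" using dist_le[OF x(3)] .
      moreover have "k \<le> d" unfolding k_def by simp
      ultimately have "graph_dist V E p x \<ge> k" by linarith
      thus ?thesis using True dist_sym[OF cg pV(1) x(1)] by simp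
    next
      case False
      have "d \<le> graph_dist V E p p'" using minD[OF pq(1) p'] False by auto
      moreover have "graph_dist V E p p' \<le> graph_dist V E p x + graph_dist V E x p'"
        using dist_tri[OF cg pV(1) x(1) p'V] .
      moreover have "k + k \<le> d" unfolding k_def by simp
      ultimately show ?thesis using pxk by linarith
    qed
  qed
  have kd: "2 * real k \<ge> real d - 1" unfolding k_def by linarith
  have dpos: "real d / 2 > 0" using d1 by simp
  have GR: "gap_ratio V \<delta> P = covering_radius V \<delta> P / ereal (real d / 2)"
    unfolding gap_ratio_def rP ..
  show ?thesis
  proof (cases "covering_radius V \<delta> P")
    case (real a)
    have a1: "a \<ge> 1" using R1 real by simp
    have ak: "a \<ge> real k" using R2 real by simp
    have G: "gap_ratio V \<delta> P = ereal (2 * a / real d)" using GR real dpos by simp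
    have ineq: "3 * a \<ge> real d"
    proof (cases "d \<le> 3")
      case True thus ?thesis using a1 by simp
    next
      case False thus ?thesis using ak kd by simp
    qed
    have geq: "2 * a / real d \<ge> 2/3" using ineq d1 by (simp add: field_simps)
    have eqc: "2 * a / real d = 2/3 \<Longrightarrow> a = 1 \<and> d = 3"
    proof -
      assume h: "2 * a / real d = 2/3"
      hence e: "3 * a = real d" using d1 by (simp add: field_simps)
      have "d \<le> 3"
      proof (rule ccontr)
        assume "\<not> d \<le> 3"
        hence "real d \<ge> 4" by simp
        thus False using e ak kd by linarith
      qed
      moreover have "d \<ge> 3" using e a1 by simp
      ultimately have "d = 3" by simp
      thus ?thesis using e by simp
    qed
    show ?thesis
    proof (intro conjI impI)
      show "2/3 \<le> gap_ratio V \<delta> P" using G geq by simp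
    next
      assume "gap_ratio V \<delta> P = 2/3"
      hence "2 * a / real d = 2/3" using G by simp
      hence "a = 1 \<and> d = 3" by (rule eqc)
      thus "covering_radius V \<delta> P = 1" "packing_radius \<delta> P = 3/2" using real rP by auto
    qed
  next
    case PInf
    hence "gap_ratio V \<delta> P = \<infinity>" using GR dpos by simp
    thus ?thesis by simp
  next
    case MInf
    thus ?thesis using R1 by simp
  qed
qed

end
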